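(* For every $k\ge1$ for which $\beta_0,\dots,\beta_k$ are defined, the subgroup $\Gamma_k=\langle\beta_0,\beta_1,\dots,\beta_k\rangle$ of $\mathbb{Q}$ equals $\frac{1}{Q_k}\mathbb{Z}$.
   Context: Setting: $k$ (the field) is algebraically closed of characteristic $0$; $\nu^*$ is a $k$-valuation of a function field $K^*$ of transcendence degree $2$ whose value group is a subgroup of $\mathbb{Q}$ and whose residue field is $k$; $S$ is an algebraic two-dimensional regular local ring with quotient field $K^*$ dominated by $V^*$, with regular parameters $(x,y)$, and $\nu^*(x)=1$. Jumping polynomials: $T_0=x$, $T_1=y$, $q_0=\infty$, $p_1,q_1$ coprime positive integers with $\nu^*(y)=p_1/q_1$; for $i\ge1$, $n_{i,j}$ ($0\le j<i$) are nonnegative integers with $n_{i,j}<q_j$ and $q_i\nu^*(T_i)=\sum_{j<i}n_{i,j}\nu^*(T_j)$, $\lambda_i\in k$ is the residue of $T_i^{q_i}/\prod_{j<i}T_j^{n_{i,j}}$, $T_{i+1}=T_i^{q_i}-\lambda_i\prod_{j<i}T_j^{n_{i,j}}$, and $p_{i+1},q_{i+1}$ are coprime positive integers with $\nu^*(T_{i+1})=q_i\nu^*(T_i)+\frac{1}{q_1\cdots q_i}\frac{p_{i+1}}{q_{i+1}}$. Put $\beta_i=\nu^*(T_i)$, $Q_i=q_1\cdots q_i$. *)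

theory Defs
  imports Complex_Main "HOL-Computational_Algebra.Primes"
begin

definition gen_subgroup :: "(nat \<Rightarrow> rat) \<Rightarrow> nat \<Rightarrow> rat set" where
  "gen_subgroup beta k = {(\<Sum>i\<le>k. of_int (c i) * beta i) | c :: nat \<Rightarrow> int. True}"

definition Qprod :: "(nat \<Rightarrow> nat) \<Rightarrow> nat \<Rightarrow> nat" where
  "Qprod q i = (\<Prod>j=1..i. q j)"

end

theory Submission
  imports Defs
begin

lemma gen_Suc:
  "gen_subgroup beta (Suc i) = {g + of_int c * beta (Suc i) | g c. g \<in> gen_subgroup beta i}"
proof (intro set_eqI iffI)
  fix z assume "z \<in> gen_subgroup beta (Suc i)"
  then obtain c where "z = (\<Sum>j\<le>Suc i. of_int (c j) * beta j)" unfolding gen_subgroup_def by auto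
  then show "z \<in> {g + of_int c * beta (Suc i) | g c. g \<in> gen_subgroup beta i}"
    unfolding gen_subgroup_def by auto
next
  fix z :: rat assume "z \<in> {g + of_int c * beta (Suc i) | g c. g \<in> gen_subgroup beta i}"
  then obtain g c d where z: "z = g + of_int c * beta (Suc i)"
     and g: "g = (\<Sum>j\<le>i. of_int (d j) * beta j)" unfolding gen_subgroup_def by auto
  have "(\<Sum>j\<le>i. of_int ((d(Suc i := c)) j) * beta j) = g"
    unfolding g by (intro sum.cong) auto
  then have "z = (\<Sum>j\<le>Suc i. of_int ((d(Suc i := c)) j) * beta j)"
    using z by simp
  then show "z \<in> gen_subgroup beta (Suc i)" unfolding gen_subgroup_def by blast
qed

lemma step_set:
  fixes Q qq pp :: nat and x b :: rat
  assumes Qp: "Q > 0" and qp: "qq > 0" and cop: "coprime pp qq"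
    and x: "x = of_int bb / of_nat Q"
    and b: "b = x + of_nat pp / (of_nat Q * of_nat qq)"
  shows "{g + of_int c * b | g c. g \<in> {of_int m / of_nat Q | m :: int. True}}
         = {of_int m / of_nat (Q * qq) | m :: int. True}"
proof (intro set_eqI iffI)
  fix z :: rat assume "z \<in> {g + of_int c * b | g c. g \<in> {of_int m / of_nat Q | m :: int. True}}"
  then obtain a c where z: "z = of_int a / of_nat Q + of_int c * b" by auto
  have "z = of_int (a * int qq + c * bb * int qq + c * int pp) / of_nat (Q * qq)"
    using Qp qp unfolding z b x by (simp add: field_simps)
  then show "z \<in> {of_int m / of_nat (Q * qq) | m :: int. True}" by blast
next
  fix z :: rat assume "z \<in> {of_int m / of_nat (Q * qq) | m :: int. True}"
  then obtain m where z: "z = of_int m / of_nat (Q * qq)" by auto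
  have "coprime (int pp) (int qq)" using cop by simp
  then obtain u v where uv: "u * int pp + v * int qq = 1"
    using bezout_int[of "int pp" "int qq"] by (auto simp: coprime_iff_gcd_eq_1)
  have uv': "(of_int u :: rat) * of_nat pp + of_int v * of_nat qq = 1"
    using arg_cong[OF uv, of "of_int :: int \<Rightarrow> rat"] by simp
  have e: "of_int (m * v - m * u * bb) / of_nat Q + of_int (m * u) * b
      = of_int m * ((of_int u :: rat) * of_nat pp + of_int v * of_nat qq) / (of_nat Q * of_nat qq)"
    using Qp qp unfolding b x by (simp add: field_simps)
  then have "z = of_int (m * v - m * u * bb) / of_nat Q + of_int (m * u) * b"
    using uv' unfolding z by simp
  then show "z \<in> {g + of_int c * b | g c. g \<in> {of_int m / of_nat Q | m :: int. True}}"
    by blast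
qed

theorem corollary5p4:
  fixes beta :: "nat \<Rightarrow> rat" and p q :: "nat \<Rightarrow> nat" and n :: "nat \<Rightarrow> nat \<Rightarrow> nat"
    and k :: nat
  assumes k1: "k \<ge> 1"
    and beta0: "beta 0 = 1"
    and pq_pos: "\<And>i. 1 \<le> i \<Longrightarrow> i \<le> k \<Longrightarrow> p i > 0 \<and> q i > 0"
    and pq_coprime: "\<And>i. 1 \<le> i \<Longrightarrow> i \<le> k \<Longrightarrow> coprime (p i) (q i)"
    and beta1: "beta 1 = of_nat (p 1) / of_nat (q 1)"
    and n_bound: "\<And>i j. 1 \<le> i \<Longrightarrow> i < k \<Longrightarrow> 1 \<le> j \<Longrightarrow> j < i \<Longrightarrow> n i j < q j"
    and n_rel: "\<And>i. 1 \<le> i \<Longrightarrow> i < k \<Longrightarrow>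
                 of_nat (q i) * beta i = (\<Sum>j<i. of_nat (n i j) * beta j)"
    and beta_rec: "\<And>i. 1 \<le> i \<Longrightarrow> i < k \<Longrightarrow>
                 beta (Suc i) = of_nat (q i) * beta i
                   + (1 / of_nat (Qprod q i)) * (of_nat (p (Suc i)) / of_nat (q (Suc i)))"
  shows "gen_subgroup beta k = {of_int m / of_nat (Qprod q k) | m :: int. True}"
proof -
  have QS: "Qprod q (Suc i) = Qprod q i * q (Suc i)" for i
    unfolding Qprod_def by (simp add: prod.nat_ivl_Suc' mult.commute)
  have Qpos: "i \<le> k \<Longrightarrow> Qprod q i > 0" for i
    unfolding Qprod_def using pq_pos by (auto intro!: prod_pos)
  have "i \<le> k \<Longrightarrow> gen_subgroup beta i = {of_int m / of_nat (Qprod q i) | m :: int. True}" for i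
  proof (induction i)
    case 0
    have "gen_subgroup beta 0 = {of_int m | m :: int. True}"
      unfolding gen_subgroup_def using beta0 by auto
    then show ?case by (simp add: Qprod_def)
  next
    case (Suc i)
    have IH: "gen_subgroup beta i = {of_int m / of_nat (Qprod q i) | m :: int. True}"
      using Suc by simp
    obtain bb where bb: "beta (Suc i) = of_int bb / of_nat (Qprod q i)
        + of_nat (p (Suc i)) / (of_nat (Qprod q i) * of_nat (q (Suc i)))"
    proof (cases "i = 0")
      case True
      then show ?thesis using that[of 0] beta1 by (simp add: Qprod_def)
    next
      case False
      have "(\<Sum>j\<le>i. of_int ((\<lambda>j. if j = i then 1 else 0) j) * beta j)
           = (\<Sum>j\<le>i. if j = i then beta j else 0)"
        by (intro sum.cong) auto
      also have "\<dots> = beta i" by (simp add: sum.delta)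
      finally have calc: "(\<Sum>j\<le>i. of_int ((\<lambda>j. if j = i then 1 else 0) j) * beta j) = beta i" .
      have "beta i \<in> gen_subgroup beta i"
        unfolding gen_subgroup_def
        by (rule CollectI, rule exI[of _ "\<lambda>j. if j = i then 1 else 0"], rule conjI[OF calc[symmetric] TrueI])
      then obtain a where a: "beta i = of_int a / of_nat (Qprod q i)" using IH by auto
      have br: "beta (Suc i) = of_nat (q i) * beta i
                   + (1 / of_nat (Qprod q i)) * (of_nat (p (Suc i)) / of_nat (q (Suc i)))"
        using beta_rec[of i] False Suc.prems by simp
      have Q0: "Qprod q i > 0" using Qpos Suc.prems by simp
      have "beta (Suc i) = of_int (int (q i) * a) / of_nat (Qprod q i)
        + of_nat (p (Suc i)) / (of_nat (Qprod q i) * of_nat (q (Suc i)))"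
        unfolding br a by simp
      then show ?thesis by (rule that)
    qed
    show ?case unfolding gen_Suc IH QS
    proof (rule step_set[OF _ _ _ refl bb])
      show "0 < Qprod q i" using Qpos Suc.prems by simp
      show "0 < q (Suc i)" using pq_pos[of "Suc i"] Suc.prems by simp
      show "coprime (p (Suc i)) (q (Suc i))" using pq_coprime[of "Suc i"] Suc.prems by simp
    qed
  qed
  then show ?thesis by simp
qed

end
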